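(* Let $\rho$ be a symmetric probability measure on $\mathbb{R}$ with positive variance $\sigma^2$ such that $(0,0)$ belongs to the interior of $D_\Lambda=\{(u,v)\in\mathbb{R}^2:\Lambda(u,v)<+\infty\}$, where $\Lambda(u,v)=\ln\int_{\mathbb{R}}e^{uz+vz^2}\,d\rho(z)$. If $A$ is a closed subset of $\mathbb{R}^2$ which does not contain $(0,\sigma^2)$, then \[\limsup_{n\to+\infty}\frac1n\ln\int_{\Delta^{*}\cap A}\exp\left(\frac{nx^2}{2y}\right)d\widetilde{\nu}_{n,\rho}(x,y)<0.\]
   Context: $\Delta=\{(x,y)\in\mathbb{R}^2: x^2\le y\}$ and $\Delta^{*}=\Delta\setminus\{(0,0)\}$ (so $y>0$ on $\Delta^*$). For $n\ge1$, $\widetilde{\nu}_{n,\rho}$ denotes the law of $\left(\frac1n\sum_{i=1}^n X_i,\frac1n\sum_{i=1}^n X_i^2\right)$ where $X_1,\dots,X_n$ are i.i.d. with law $\rho$. *)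

theory Defs
  imports "HOL-Probability.Probability"
begin

definition Delta :: "(real \<times> real) set" where
  "Delta = {(x, y). x\<^sup>2 \<le> y}"

definition Delta_star :: "(real \<times> real) set" where
  "Delta_star = Delta - {(0, 0)}"

definition nu_tilde :: "nat \<Rightarrow> real measure \<Rightarrow> (real \<times> real) measure" where
  "nu_tilde n \<rho> = distr (PiM {..<n} (\<lambda>_. \<rho>)) borel
     (\<lambda>X. ((\<Sum>i<n. X i) / real n, (\<Sum>i<n. (X i)\<^sup>2) / real n))"

definition D_Lambda :: "real measure \<Rightarrow> (real \<times> real) set" where
  "D_Lambda \<rho> = {(u, v). (\<integral>\<^sup>+ z. ennreal (exp (u * z + v * z\<^sup>2)) \<partial>\<rho>) < \<infinity>}"

definition eln :: "ennreal \<Rightarrow> ereal" where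
  "eln t = (if t = 0 then -\<infinity> else if t = \<infinity> then \<infinity> else ereal (ln (enn2real t)))"

end

theory Submission
  imports Defs
begin


lemma tanh_lt_self: "x > 0 \<Longrightarrow> tanh x < (x::real)"
proof -
  assume x: "x > 0"
  have "(\<lambda>s. s - tanh s) 0 < (\<lambda>s. s - tanh s) x"
  proof (rule DERIV_pos_imp_increasing_open[OF x])
    fix s :: real assume s: "0 < s" "s < x"
    have "DERIV (\<lambda>s. s - tanh s) s :> 1 - (1 - tanh s ^ 2)"
      by (auto intro!: derivative_eq_intros)
    moreover have "1 - (1 - tanh s ^ 2) > 0" using s by simp
    ultimately show "\<exists>y. DERIV (\<lambda>s. s - tanh s) s :> y \<and> 0 < y" by blast
  next
    show "continuous_on {0..x} (\<lambda>s. s - tanh s)"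
      by (intro continuous_intros) auto
  qed
  then show ?thesis by simp
qed

lemma cosh_lt_exp_pos: "x > 0 \<Longrightarrow> ln (cosh x) < (x::real)^2/2"
proof -
  assume x: "x > 0"
  have "(\<lambda>s. s^2/2 - ln (cosh s)) 0 < (\<lambda>s. s^2/2 - ln (cosh s)) x"
  proof (rule DERIV_pos_imp_increasing_open[OF x])
    fix s :: real assume s: "0 < s" "s < x"
    have "DERIV (\<lambda>s. s^2/2 - ln (cosh s)) s :> s - sinh s / cosh s"
      by (auto intro!: derivative_eq_intros simp: field_simps)
    moreover have "s - sinh s / cosh s > 0" using tanh_lt_self[OF s(1)] by (simp add: tanh_def)
    ultimately show "\<exists>y. DERIV (\<lambda>s. s^2/2 - ln (cosh s)) s :> y \<and> 0 < y" by blast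
  next
    show "continuous_on {0..x} (\<lambda>s. s^2/2 - ln (cosh s))"
      by (intro continuous_intros) auto
  qed
  then show ?thesis by simp
qed

lemma cosh_lt_exp: "x \<noteq> 0 \<Longrightarrow> cosh x < exp ((x::real)^2/2)"
proof -
  assume "x \<noteq> 0"
  then have "\<bar>x\<bar> > 0" by simp
  from cosh_lt_exp_pos[OF this] have "ln (cosh x) < x^2/2" by simp
  then show ?thesis by (metis cosh_real_pos exp_less_mono exp_ln)
qed

lemma cosh_le_exp: "cosh x \<le> exp ((x::real)^2/2)"
  by (cases "x = 0") (auto intro: less_imp_le cosh_lt_exp)




definition goodr :: "real measure \<Rightarrow> (real \<Rightarrow> real) \<Rightarrow> bool" where
  "goodr \<rho> h \<longleftrightarrow> h \<in> borel_measurable borel \<and> integrable \<rho> (\<lambda>z. exp (h z)) \<and> (\<integral>z. exp (h z) \<partial>\<rho>) < 1"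

locale sym_rho =
  fixes \<rho> :: "real measure" and \<epsilon> :: real
  assumes P: "prob_space \<rho>" and sets_rho: "sets \<rho> = sets borel"
    and symm: "distr \<rho> borel uminus = \<rho>"
    and eps: "\<epsilon> > 0" and fin: "(\<integral>\<^sup>+ z. ennreal (exp (\<epsilon> * z\<^sup>2)) \<partial>\<rho>) < \<infinity>"
    and s2pos: "(\<integral>z. z\<^sup>2 \<partial>\<rho>) > 0"
begin

sublocale prob_space \<rho> by (rule P)

lemma meas: "f \<in> borel_measurable borel \<Longrightarrow> f \<in> borel_measurable \<rho>"
  by (simp add: measurable_cong_sets[OF sets_rho refl])

lemma int_exp_eps: "integrable \<rho> (\<lambda>z. exp (\<epsilon> * z\<^sup>2))"
  by (rule integrableI_bounded) (use fin in \<open>auto intro!: meas\<close>)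

lemma int_exp_le: assumes "v \<le> \<epsilon>" shows "integrable \<rho> (\<lambda>z. exp (v * z\<^sup>2))"
proof (rule Bochner_Integration.integrable_bound[OF int_exp_eps])
  show "(\<lambda>z. exp (v * z\<^sup>2)) \<in> borel_measurable \<rho>" by (intro meas) measurable
  show "AE x in \<rho>. norm (exp (v * x\<^sup>2)) \<le> norm (exp (\<epsilon> * x\<^sup>2))"
    using assms by (auto intro!: mult_right_mono)
qed

lemma z4_bound: "z^4 \<le> 16 / \<epsilon>\<^sup>2 * exp (\<epsilon> * z\<^sup>2 / 2)"
proof -
  define u where "u = \<epsilon> * z\<^sup>2 / 2"
  have u: "u \<ge> 0" using eps by (simp add: u_def)
  have "1 + u/2 \<le> exp (u/2)" by (rule exp_ge_add_one_self)
  then have "u/2 \<le> exp (u/2)" by linarith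
  then have "(u/2)\<^sup>2 \<le> (exp (u/2))\<^sup>2" using u by (intro power_mono) auto
  also have "(exp (u/2))\<^sup>2 = exp u" by (simp add: power2_eq_square flip: exp_add)
  finally have "(u/2)\<^sup>2 \<le> exp u" .
  then have "\<epsilon>\<^sup>2 * z^4 / 16 \<le> exp u" by (simp add: u_def power2_eq_square power4_eq_xxxx field_simps)
  then show ?thesis using eps by (simp add: u_def field_simps)
qed

lemma int_z4: "integrable \<rho> (\<lambda>z. z^4)"
proof (rule Bochner_Integration.integrable_bound[OF Bochner_Integration.integrable_mult_right[OF int_exp_le[of "\<epsilon>/2"]]])
  show "(\<lambda>z. z^4) \<in> borel_measurable \<rho>" by (intro meas) measurable
  show "AE x in \<rho>. norm (x^4) \<le> norm (16 / \<epsilon>\<^sup>2 * exp (\<epsilon> / 2 * x\<^sup>2))"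
    using z4_bound by (auto simp: mult.commute)
qed (use eps in simp)

lemma int_z2: "integrable \<rho> (\<lambda>z. z\<^sup>2)"
proof (rule Bochner_Integration.integrable_bound[OF Bochner_Integration.integrable_add[OF int_z4 integrable_const[of 1]]])
  show "(\<lambda>z. z\<^sup>2) \<in> borel_measurable \<rho>" by (intro meas) measurable
  show "AE x in \<rho>. norm (x\<^sup>2) \<le> norm (x^4 + 1)"
  proof (intro AE_I2)
    fix x :: real
    have "0 \<le> (x\<^sup>2 - 1)\<^sup>2" by simp
    moreover have "(x\<^sup>2 - 1)\<^sup>2 = x^4 - 2 * x\<^sup>2 + 1" by (simp add: power2_eq_square power4_eq_xxxx algebra_simps)
    moreover have "0 \<le> x\<^sup>2" by simp
    ultimately have "x\<^sup>2 \<le> x^4 + 1" by linarith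
    then show "norm (x\<^sup>2) \<le> norm (x^4 + 1)" by simp
  qed
qed

lemma int_bdd: fixes f :: "real \<Rightarrow> real" shows "f \<in> borel_measurable borel \<Longrightarrow> (\<And>z. \<bar>f z\<bar> \<le> B) \<Longrightarrow> integrable \<rho> f"
  by (intro integrable_const_bound[where B=B] meas) auto

lemma sym_int: fixes f :: "real \<Rightarrow> real" shows "f \<in> borel_measurable borel \<Longrightarrow> (\<integral>z. f (- z) \<partial>\<rho>) = (\<integral>z. f z \<partial>\<rho>)"
proof -
  assume f: "f \<in> borel_measurable borel"
  have "(\<integral>z. f z \<partial>(distr \<rho> borel uminus)) = (\<integral>z. f (- z) \<partial>\<rho>)"
    by (rule integral_distr) (auto intro: meas f)
  then show ?thesis using symm by simp
qed

lemma not_AE_zero: "\<not> (AE z in \<rho>. z = 0)"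
proof
  assume "AE z in \<rho>. z = 0"
  then have "AE z in \<rho>. z\<^sup>2 = (0::real)" by eventually_elim simp
  then have "(\<integral>z. z\<^sup>2 \<partial>\<rho>) = (\<integral>z. 0 \<partial>\<rho>)"
    by (intro integral_cong_AE) (auto intro: meas)
  then show False using s2pos by simp
qed

lemma M_lt1:
  assumes t: "t \<noteq> 0"
  shows "goodr \<rho> (\<lambda>z. t * z - t\<^sup>2 * z\<^sup>2 / 2)"
proof -
  let ?f = "\<lambda>z. exp (t * z - t\<^sup>2 * z\<^sup>2 / 2)"
  have fm: "?f \<in> borel_measurable borel" by measurable
  have fb: "\<bar>?f z\<bar> \<le> exp (1/2)" for z
  proof -
    have "t * z - t\<^sup>2 * z\<^sup>2 / 2 \<le> 1/2"
      using sum_power2_ge_zero[of "t*z - 1" 0] by (simp add: power2_eq_square algebra_simps)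
    then show ?thesis by simp
  qed
  have fi: "integrable \<rho> ?f" by (rule int_bdd[OF fm fb])
  let ?g = "\<lambda>z. 1 - cosh (t * z) * exp (- (t\<^sup>2 * z\<^sup>2 / 2))"
  have gm: "?g \<in> borel_measurable borel" by (intro borel_measurable_continuous_onI continuous_intros) auto
  have g_nonneg: "?g z \<ge> 0" for z
  proof -
    have "cosh (t*z) * exp (- (t\<^sup>2 * z\<^sup>2 / 2)) \<le> exp ((t*z)\<^sup>2/2) * exp (- (t\<^sup>2 * z\<^sup>2 / 2))"
      by (intro mult_right_mono cosh_le_exp) auto
    also have "\<dots> = 1" by (simp add: power_mult_distrib flip: exp_add)
    finally show ?thesis by simp
  qed
  have g_pos: "?g z > 0" if "z \<noteq> 0" for z
  proof -
    have "cosh (t*z) * exp (- (t\<^sup>2 * z\<^sup>2 / 2)) < exp ((t*z)\<^sup>2/2) * exp (- (t\<^sup>2 * z\<^sup>2 / 2))"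
      using t that by (intro mult_strict_right_mono cosh_lt_exp) auto
    also have "\<dots> = 1" by (simp add: power_mult_distrib flip: exp_add)
    finally show ?thesis by simp
  qed
  have gb: "\<bar>?g z\<bar> \<le> 1" for z
  proof -
    have "cosh (t * z) * exp (- (t\<^sup>2 * z\<^sup>2 / 2)) \<ge> 0" by simp
    then show ?thesis using g_nonneg[of z] by simp
  qed
  have gi: "integrable \<rho> ?g" by (rule int_bdd[OF gm gb])
  have "(\<integral>z. ?g z \<partial>\<rho>) \<noteq> 0"
  proof
    assume "(\<integral>z. ?g z \<partial>\<rho>) = 0"
    then have "AE z in \<rho>. ?g z = 0"
      using integral_nonneg_eq_0_iff_AE[OF gi] g_nonneg by simp
    then have "AE z in \<rho>. z = 0" by eventually_elim (use g_pos in force)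
    then show False using not_AE_zero by simp
  qed
  moreover have "(\<integral>z. ?g z \<partial>\<rho>) \<ge> 0" by (intro integral_nonneg_AE AE_I2 g_nonneg)
  ultimately have gpos: "(\<integral>z. ?g z \<partial>\<rho>) > 0" by simp
  have fsym: "(\<integral>z. ?f (- z) \<partial>\<rho>) = (\<integral>z. ?f z \<partial>\<rho>)" by (rule sym_int[OF fm])
  have fneg_i: "integrable \<rho> (\<lambda>z. ?f (- z))"
  proof (rule int_bdd[where B="exp (1/2)"])
    show "(\<lambda>z. ?f (- z)) \<in> borel_measurable borel" by measurable
    fix z show "\<bar>?f (- z)\<bar> \<le> exp (1/2)" by (rule fb)
  qed
  have eq: "?g z = 1 - (?f z + ?f (- z)) / 2" for z
    by (simp add: cosh_field_def field_simps flip: exp_add)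
  have "(\<integral>z. ?g z \<partial>\<rho>) = 1 - ((\<integral>z. ?f z \<partial>\<rho>) + (\<integral>z. ?f (- z) \<partial>\<rho>)) / 2"
    unfolding eq using fi fneg_i by (simp add: prob_space)
  then have "(\<integral>z. ?f z \<partial>\<rho>) < 1" using gpos fsym by simp
  then show ?thesis unfolding goodr_def using fi by simp
qed

end



context sym_rho begin

lemma goodr_slack:
  assumes "goodr \<rho> h" shows "\<exists>\<gamma>>0. goodr \<rho> (\<lambda>z. h z + \<gamma>)"
proof -
  from assms have hm: "h \<in> borel_measurable borel" and hi: "integrable \<rho> (\<lambda>z. exp (h z))"
    and hl: "(\<integral>z. exp (h z) \<partial>\<rho>) < 1" by (auto simp: goodr_def)
  define I where "I = (\<integral>z. exp (h z) \<partial>\<rho>)"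
  have I0: "I \<ge> 0" unfolding I_def by (intro integral_nonneg_AE) auto
  define \<gamma> where "\<gamma> = ln (2 / (1 + I))"
  have hlI: "I < 1" using hl by (simp add: I_def)
  have "2 / (1 + I) > 1" using I0 hlI by (simp add: less_divide_eq)
  then have g: "\<gamma> > 0" unfolding \<gamma>_def by (rule ln_gt_zero)
  have "(\<integral>z. exp (h z + \<gamma>) \<partial>\<rho>) = exp \<gamma> * I"
    by (simp add: exp_add I_def mult.commute)
  also have "\<dots> = 2 * I / (1 + I)" using I0 by (simp add: \<gamma>_def)
  also have "\<dots> < 1" using I0 hlI by (simp add: divide_less_eq)
  finally have "(\<integral>z. exp (h z + \<gamma>) \<partial>\<rho>) < 1" .
  moreover have "integrable \<rho> (\<lambda>z. exp (h z + \<gamma>))"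
    using integrable_mult_left[OF hi, of "exp \<gamma>"] by (simp add: exp_add mult.commute)
  ultimately show ?thesis using g hm unfolding goodr_def by (intro exI[of _ \<gamma>]) auto
qed

lemma exp_le_quad: "s \<ge> 0 \<Longrightarrow> exp s \<le> 1 + s + s\<^sup>2 * exp (s::real)"
proof -
  assume s: "s \<ge> 0"
  have a: "1 - s \<le> exp (- s)" using exp_ge_add_one_self[of "-s"] by simp
  have b: "exp s * (1 - s) \<le> 1"
    using mult_left_mono[OF a, of "exp s"] by (simp add: exp_minus field_simps)
  have c: "1 - exp (- s) \<le> s" using exp_ge_add_one_self[of "-s"] by simp
  have e: "exp s * (1 - exp (- s)) = exp s - 1" by (simp add: exp_minus field_simps)
  have d: "exp s - 1 \<le> s * exp s"
    using mult_left_mono[OF c, of "exp s"] e by (simp add: mult.commute)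
  have "exp s - 1 - s \<le> s * (exp s - 1)" using b by (simp add: algebra_simps)
  also have "\<dots> \<le> s * (s * exp s)" using d s by (intro mult_left_mono) auto
  finally show ?thesis by (simp add: power2_eq_square algebra_simps)
qed

lemma exp_neg_le_quad: "s \<ge> 0 \<Longrightarrow> exp (- s) \<le> 1 - s + (s::real)\<^sup>2"
proof -
  assume s: "s \<ge> 0"
  have a: "1 + s \<le> exp s" by (rule exp_ge_add_one_self)
  have b: "exp (- s) * (1 + s) \<le> 1"
    using mult_left_mono[OF a, of "exp (-s)"] by (simp add: exp_minus field_simps)
  have c: "1 - exp (- s) \<le> s" using exp_ge_add_one_self[of "-s"] by simp
  have "exp (- s) - 1 + s \<le> s * (1 - exp (- s))" using b by (simp add: algebra_simps)
  also have "\<dots> \<le> s * s" using c s by (intro mult_left_mono) auto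
  finally show ?thesis by (simp add: power2_eq_square algebra_simps)
qed

lemma good_above:
  assumes c: "c > (\<integral>z. z\<^sup>2 \<partial>\<rho>)"
  shows "\<exists>v>0. goodr \<rho> (\<lambda>z. v * (z\<^sup>2 - c))"
proof -
  define s2 where "s2 = (\<integral>z. z\<^sup>2 \<partial>\<rho>)"
  define B where "B = (\<integral>z. exp (\<epsilon> * z\<^sup>2) \<partial>\<rho>)"
  define C where "C = 16 / \<epsilon>\<^sup>2 * B"
  have B0: "B \<ge> 0" unfolding B_def by (intro integral_nonneg_AE) auto
  have C0: "C \<ge> 0" using B0 by (simp add: C_def)
  define v where "v = min (\<epsilon>/2) ((c - s2) / (2 * (C + 1)))"
  have v0: "v > 0" using eps c C0 by (simp add: v_def s2_def)
  have vle: "v \<le> \<epsilon>/2" unfolding v_def by (rule min.cobounded1)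
  have vC: "v * C \<le> (c - s2) / 2"
  proof -
    have "v \<le> (c - s2) / (2 * (C + 1))" by (simp add: v_def)
    then have "v * (2 * (C + 1)) \<le> c - s2" using C0 by (simp add: field_simps)
    then show ?thesis using v0 C0 by (simp add: algebra_simps)
  qed
  have pw: "exp (v * z\<^sup>2) \<le> 1 + v * z\<^sup>2 + v\<^sup>2 * (16 / \<epsilon>\<^sup>2 * exp (\<epsilon> * z\<^sup>2))" for z
  proof -
    have "exp (v * z\<^sup>2) \<le> 1 + v * z\<^sup>2 + (v * z\<^sup>2)\<^sup>2 * exp (v * z\<^sup>2)"
      using v0 by (intro exp_le_quad) simp
    also have "(v * z\<^sup>2)\<^sup>2 * exp (v * z\<^sup>2) = v\<^sup>2 * (z^4 * exp (v * z\<^sup>2))"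
      by (simp add: power2_eq_square power4_eq_xxxx)
    also have "z^4 * exp (v * z\<^sup>2) \<le> (16 / \<epsilon>\<^sup>2 * exp (\<epsilon> * z\<^sup>2 / 2)) * exp (\<epsilon> * z\<^sup>2 / 2)"
    proof (intro mult_mono z4_bound)
      have "v * z\<^sup>2 \<le> \<epsilon> / 2 * z\<^sup>2" by (rule mult_right_mono[OF vle]) simp
      then show "exp (v * z\<^sup>2) \<le> exp (\<epsilon> * z\<^sup>2 / 2)" by simp
    qed auto
    also have "\<dots> = 16 / \<epsilon>\<^sup>2 * exp (\<epsilon> * z\<^sup>2)" by (simp flip: exp_add)
    finally show ?thesis by (simp add: mult_left_mono)
  qed
  have i1: "integrable \<rho> (\<lambda>z. exp (v * z\<^sup>2))" using vle eps by (intro int_exp_le) simp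
  have i2: "integrable \<rho> (\<lambda>z. 1 + v * z\<^sup>2 + v\<^sup>2 * (16 / \<epsilon>\<^sup>2 * exp (\<epsilon> * z\<^sup>2)))"
    using int_z2 int_exp_eps by auto
  have "(\<integral>z. exp (v * z\<^sup>2) \<partial>\<rho>) \<le> (\<integral>z. 1 + v * z\<^sup>2 + v\<^sup>2 * (16 / \<epsilon>\<^sup>2 * exp (\<epsilon> * z\<^sup>2)) \<partial>\<rho>)"
    by (intro integral_mono i1 i2 pw)
  also have "\<dots> = 1 + v * s2 + v\<^sup>2 * C"
    using int_z2 int_exp_eps by (simp add: s2_def C_def B_def prob_space)
  also have "v\<^sup>2 * C = v * (v * C)" by (simp add: power2_eq_square)
  also have "1 + v * s2 + v * (v * C) \<le> 1 + v * s2 + v * ((c - s2) / 2)"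
    using vC v0 by (intro add_left_mono mult_left_mono) auto
  also have "\<dots> < 1 + v * c"
  proof -
    have "v * ((c - s2)/2) < v * (c - s2)" using v0 c by (simp add: s2_def)
    then show ?thesis by (simp add: algebra_simps)
  qed
  also have "\<dots> \<le> exp (v * c)" by (rule exp_ge_add_one_self)
  finally have lt: "(\<integral>z. exp (v * z\<^sup>2) \<partial>\<rho>) < exp (v * c)" .
  have eq: "exp (v * (z\<^sup>2 - c)) = exp (- (v * c)) * exp (v * z\<^sup>2)" for z
    by (simp add: algebra_simps flip: exp_add)
  have "(\<integral>z. exp (v * (z\<^sup>2 - c)) \<partial>\<rho>) = exp (- (v * c)) * (\<integral>z. exp (v * z\<^sup>2) \<partial>\<rho>)"
    unfolding eq by simp
  also have "\<dots> < exp (- (v * c)) * exp (v * c)" using lt by simp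
  also have "\<dots> = 1" by (simp flip: exp_add)
  finally have "(\<integral>z. exp (v * (z\<^sup>2 - c)) \<partial>\<rho>) < 1" .
  moreover have "integrable \<rho> (\<lambda>z. exp (v * (z\<^sup>2 - c)))"
    unfolding eq using i1 by simp
  ultimately show ?thesis using v0 unfolding goodr_def by (intro exI[of _ v]) auto
qed

lemma good_below:
  assumes c: "c < (\<integral>z. z\<^sup>2 \<partial>\<rho>)"
  shows "\<exists>v>0. goodr \<rho> (\<lambda>z. v * (c - z\<^sup>2))"
proof -
  define s2 where "s2 = (\<integral>z. z\<^sup>2 \<partial>\<rho>)"
  define D where "D = (\<integral>z. z^4 \<partial>\<rho>)"
  have D0: "D \<ge> 0" unfolding D_def by (intro integral_nonneg_AE) auto
  define v where "v = (s2 - c) / (2 * (D + 1))"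
  have v0: "v > 0" using c D0 by (simp add: v_def s2_def)
  have vD: "v * D \<le> (s2 - c) / 2"
  proof -
    have "v * (2 * (D + 1)) = s2 - c" using D0 by (simp add: v_def)
    then show ?thesis using v0 D0 by (simp add: algebra_simps)
  qed
  have pw: "exp (- (v * z\<^sup>2)) \<le> 1 - v * z\<^sup>2 + v\<^sup>2 * z^4" for z
  proof -
    have "exp (- (v * z\<^sup>2)) \<le> 1 - v * z\<^sup>2 + (v * z\<^sup>2)\<^sup>2"
      using v0 by (intro exp_neg_le_quad) simp
    then show ?thesis by (simp add: power2_eq_square power4_eq_xxxx ac_simps)
  qed
  have i1: "integrable \<rho> (\<lambda>z. exp (- (v * z\<^sup>2)))"
    by (rule int_bdd[where B=1]) (use v0 in auto)
  have i2: "integrable \<rho> (\<lambda>z. 1 - v * z\<^sup>2 + v\<^sup>2 * z^4)"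
    using int_z2 int_z4 by auto
  have "(\<integral>z. exp (- (v * z\<^sup>2)) \<partial>\<rho>) \<le> (\<integral>z. 1 - v * z\<^sup>2 + v\<^sup>2 * z^4 \<partial>\<rho>)"
    by (intro integral_mono i1 i2 pw)
  also have "\<dots> = 1 - v * s2 + v\<^sup>2 * D"
    using int_z2 int_z4 by (simp add: s2_def D_def prob_space)
  also have "v\<^sup>2 * D = v * (v * D)" by (simp add: power2_eq_square)
  also have "1 - v * s2 + v * (v * D) \<le> 1 - v * s2 + v * ((s2 - c) / 2)"
    using vD v0 by (intro add_left_mono mult_left_mono) auto
  also have "\<dots> < 1 - v * c"
  proof -
    have "v * ((s2 - c)/2) < v * (s2 - c)" using v0 c by (simp add: s2_def)
    then show ?thesis by (simp add: algebra_simps)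
  qed
  also have "\<dots> \<le> exp (- (v * c))" using exp_ge_add_one_self[of "- (v * c)"] by simp
  finally have lt: "(\<integral>z. exp (- (v * z\<^sup>2)) \<partial>\<rho>) < exp (- (v * c))" .
  have eq: "exp (v * (c - z\<^sup>2)) = exp (v * c) * exp (- (v * z\<^sup>2))" for z
    by (simp add: algebra_simps flip: exp_add)
  have "(\<integral>z. exp (v * (c - z\<^sup>2)) \<partial>\<rho>) = exp (v * c) * (\<integral>z. exp (- (v * z\<^sup>2)) \<partial>\<rho>)"
    unfolding eq by simp
  also have "\<dots> < exp (v * c) * exp (- (v * c))" using lt by simp
  also have "\<dots> = 1" by (simp flip: exp_add)
  finally have "(\<integral>z. exp (v * (c - z\<^sup>2)) \<partial>\<rho>) < 1" .
  moreover have "integrable \<rho> (\<lambda>z. exp (v * (c - z\<^sup>2)))"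
    unfolding eq using i1 by simp
  ultimately show ?thesis using v0 unfolding goodr_def by (intro exI[of _ v]) auto
qed

lemma good_big:
  shows "\<exists>Y. goodr \<rho> (\<lambda>z. 1/2 + \<epsilon> * (z\<^sup>2 - Y))"
proof -
  define B where "B = (\<integral>z. exp (\<epsilon> * z\<^sup>2) \<partial>\<rho>)"
  have B0: "B \<ge> 0" unfolding B_def by (intro integral_nonneg_AE) auto
  define Y where "Y = (1/2 + ln (B + 1)) / \<epsilon>"
  have eq: "exp (1/2 + \<epsilon> * (z\<^sup>2 - Y)) = exp (1/2 - \<epsilon> * Y) * exp (\<epsilon> * z\<^sup>2)" for z
    by (simp add: algebra_simps flip: exp_add)
  have e: "exp (1/2 - \<epsilon> * Y) = 1 / (B + 1)"
    using eps B0 by (simp add: Y_def exp_diff exp_minus inverse_eq_divide)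
  have "(\<integral>z. exp (1/2 + \<epsilon> * (z\<^sup>2 - Y)) \<partial>\<rho>) = B / (B + 1)"
    unfolding eq e by (simp add: B_def)
  also have "\<dots> < 1" using B0 by simp
  finally have "(\<integral>z. exp (1/2 + \<epsilon> * (z\<^sup>2 - Y)) \<partial>\<rho>) < 1" .
  moreover have "integrable \<rho> (\<lambda>z. exp (1/2 + \<epsilon> * (z\<^sup>2 - Y)))"
    unfolding eq using int_exp_eps by simp
  ultimately show ?thesis unfolding goodr_def by (intro exI[of _ Y]) auto
qed

end



context sym_rho begin

lemma good_zero:
  "\<exists>k\<ge>0. \<exists>\<eta>>0. goodr \<rho> (\<lambda>z. (if z = 0 then 0 else 1/2) + k * (\<eta> - z\<^sup>2))"
proof -
  define s where "s = (\<lambda>(i::nat) z. exp ((if z = 0 then 0 else 1/2) - real i * z\<^sup>2))"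
  define f where "f = (\<lambda>z::real. if z = 0 then 1 else (0::real))"
  have sm: "s i \<in> borel_measurable borel" for i unfolding s_def by measurable
  have fm: "f \<in> borel_measurable borel" unfolding f_def by measurable
  have sb: "\<bar>s i z\<bar> \<le> exp (1/2)" for i z
  proof -
    have "(if z = 0 then 0 else 1/2) - real i * z\<^sup>2 \<le> 1/2" by auto
    then show ?thesis by (simp add: s_def)
  qed
  have lim: "(\<lambda>i. s i z) \<longlonglongrightarrow> f z" for z
  proof (cases "z = 0")
    case True then show ?thesis by (simp add: s_def f_def)
  next
    case False
    have eq: "s i z = exp (1/2) * exp (- z\<^sup>2) ^ i" for i
      using False by (simp add: s_def exp_of_nat_mult[symmetric] exp_diff exp_minus field_simps)
    have "exp (- z\<^sup>2) < 1" using False by simp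
    then have "(\<lambda>i. exp (- z\<^sup>2) ^ i) \<longlonglongrightarrow> 0" by (intro LIMSEQ_power_zero) simp
    then have "(\<lambda>i. exp (1/2) * exp (- z\<^sup>2) ^ i) \<longlonglongrightarrow> exp (1/2) * 0" by (intro tendsto_mult tendsto_const)
    then show ?thesis using False by (simp add: eq f_def)
  qed
  have conv: "(\<lambda>i. \<integral>z. s i z \<partial>\<rho>) \<longlonglongrightarrow> (\<integral>z. f z \<partial>\<rho>)"
    by (rule integral_dominated_convergence[where w="\<lambda>_. exp (1/2)"])
       (use sm fm sb lim in \<open>auto intro: meas\<close>)
  have fi: "integrable \<rho> f" by (rule int_bdd[OF fm, where B=1]) (simp add: f_def)
  have p0: "(\<integral>z. f z \<partial>\<rho>) < 1"
  proof -
    have "(\<integral>z. 1 - f z \<partial>\<rho>) \<noteq> 0"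
    proof
      assume "(\<integral>z. 1 - f z \<partial>\<rho>) = 0"
      then have "AE z in \<rho>. 1 - f z = 0"
        using integral_nonneg_eq_0_iff_AE[of \<rho> "\<lambda>z. 1 - f z"] fi by (simp add: f_def)
      then have "AE z in \<rho>. z = 0" by eventually_elim (simp add: f_def split: if_splits)
      then show False using not_AE_zero by simp
    qed
    moreover have "(\<integral>z. 1 - f z \<partial>\<rho>) = 1 - (\<integral>z. f z \<partial>\<rho>)" using fi by (simp add: prob_space)
    moreover have "(\<integral>z. f z \<partial>\<rho>) \<le> 1"
    proof -
      have "(\<integral>z. f z \<partial>\<rho>) \<le> (\<integral>z. 1 \<partial>\<rho>)" by (intro integral_mono fi) (auto simp: f_def)
      then show ?thesis by (simp add: prob_space)
    qed
    ultimately show ?thesis by linarith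
  qed
  define p where "p = (\<integral>z. f z \<partial>\<rho>)"
  have "eventually (\<lambda>i. (\<integral>z. s i z \<partial>\<rho>) < (1 + p) / 2) sequentially"
    using conv p0 by (intro order_tendstoD(2)) (auto simp: p_def)
  then obtain i where Ji: "(\<integral>z. s i z \<partial>\<rho>) < (1 + p) / 2" by (auto simp: eventually_sequentially)
  define J where "J = (\<integral>z. s i z \<partial>\<rho>)"
  have J1: "J < 1" using Ji p0 by (simp add: J_def p_def)
  have J0: "J \<ge> 0" unfolding J_def s_def by (intro integral_nonneg_AE) auto
  define \<eta> where "\<eta> = ln (2 / (1 + J)) / (real i + 1)"
  have l1: "2 / (1 + J) > 1" using J0 J1 by (simp add: less_divide_eq)
  then have lpos: "ln (2 / (1 + J)) > 0" by (rule ln_gt_zero)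
  have eta: "\<eta> > 0" using lpos by (simp add: \<eta>_def)
  have keta: "real i * \<eta> \<le> ln (2 / (1 + J))"
  proof -
    have "real i * \<eta> = ln (2 / (1 + J)) * (real i / (real i + 1))" by (simp add: \<eta>_def)
    also have "\<dots> \<le> ln (2 / (1 + J)) * 1" using lpos by (intro mult_left_mono) auto
    finally show ?thesis by simp
  qed
  let ?h = "\<lambda>z. (if z = 0 then 0 else 1/2) + real i * (\<eta> - z\<^sup>2)"
  have eq: "exp (?h z) = exp (real i * \<eta>) * s i z" for z
    by (simp add: s_def algebra_simps flip: exp_add)
  have si: "integrable \<rho> (s i)" by (rule int_bdd[OF sm sb])
  have "(\<integral>z. exp (?h z) \<partial>\<rho>) = exp (real i * \<eta>) * J" unfolding eq J_def by simp
  also have "\<dots> \<le> exp (ln (2 / (1 + J))) * J" proof (rule mult_right_mono)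
    show "exp (real i * \<eta>) \<le> exp (ln (2 / (1 + J)))" using keta by (subst exp_le_cancel_iff) 
  qed (use J0 in simp)
  also have "\<dots> = 2 * J / (1 + J)" using J0 by simp
  also have "\<dots> < 1" using J0 J1 by (simp add: divide_less_eq)
  finally have "(\<integral>z. exp (?h z) \<partial>\<rho>) < 1" .
  moreover have "integrable \<rho> (\<lambda>z. exp (?h z))" unfolding eq using si by simp
  moreover have "?h \<in> borel_measurable borel" by measurable
  ultimately have "goodr \<rho> ?h" unfolding goodr_def by simp
  note G = this
  show ?thesis
  proof (rule exI[of _ "real i"], rule conjI)
    show "real i \<ge> 0" by simp
    show "\<exists>\<eta>>0. goodr \<rho> (\<lambda>z. (if z = 0 then 0 else 1/2) + real i * (\<eta> - z\<^sup>2))"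
    proof (rule exI[of _ \<eta>])
      show "\<eta> > 0 \<and> goodr \<rho> (\<lambda>z. (if z = 0 then 0 else 1/2) + real i * (\<eta> - z\<^sup>2))"
        using G eta by simp
    qed
  qed
qed

end



definition covers :: "(real \<times> real) set \<Rightarrow> (real \<Rightarrow> real) \<Rightarrow> bool" where
  "covers U h \<longleftrightarrow> (\<forall>n::nat. \<forall>X::nat \<Rightarrow> real. n > 0 \<longrightarrow>
     ((\<Sum>i<n. X i) / real n, (\<Sum>i<n. (X i)\<^sup>2) / real n) \<in> U \<longrightarrow>
     real n * ((\<Sum>i<n. X i) / real n)\<^sup>2 / (2 * ((\<Sum>i<n. (X i)\<^sup>2) / real n)) \<le> (\<Sum>i<n. h (X i)))"

lemma cover_lin:
  assumes "\<And>x y. (x, y) \<in> U \<Longrightarrow> 0 < y \<and> x\<^sup>2 / (2 * y) \<le> \<alpha> * x + \<beta> * y + \<gamma>"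
  shows "covers U (\<lambda>z. \<alpha> * z + \<beta> * z\<^sup>2 + \<gamma>)"
  unfolding covers_def
proof (intro allI impI)
  fix n :: nat and X :: "nat \<Rightarrow> real"
  assume n: "n > 0"
  define x where "x = (\<Sum>i<n. X i) / real n"
  define y where "y = (\<Sum>i<n. (X i)\<^sup>2) / real n"
  assume "((\<Sum>i<n. X i) / real n, (\<Sum>i<n. (X i)\<^sup>2) / real n) \<in> U"
  then have xy: "(x, y) \<in> U" by (simp add: x_def y_def)
  from assms[OF xy] have y: "0 < y" and le: "x\<^sup>2 / (2 * y) \<le> \<alpha> * x + \<beta> * y + \<gamma>" by auto
  have "real n * x\<^sup>2 / (2 * y) = real n * (x\<^sup>2 / (2 * y))" by simp
  also have "\<dots> \<le> real n * (\<alpha> * x + \<beta> * y + \<gamma>)" using le n by (intro mult_left_mono) auto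
  also have "\<dots> = \<alpha> * (real n * x) + \<beta> * (real n * y) + real n * \<gamma>" by (simp add: algebra_simps)
  also have "real n * x = (\<Sum>i<n. X i)" using n by (simp add: x_def)
  also have "real n * y = (\<Sum>i<n. (X i)\<^sup>2)" using n by (simp add: y_def)
  also have "\<alpha> * (\<Sum>i<n. X i) + \<beta> * (\<Sum>i<n. (X i)\<^sup>2) + real n * \<gamma> = (\<Sum>i<n. \<alpha> * X i + \<beta> * (X i)\<^sup>2 + \<gamma>)"
    by (simp add: sum.distrib sum_distrib_left)
  finally show "real n * ((\<Sum>i<n. X i) / real n)\<^sup>2 / (2 * ((\<Sum>i<n. (X i)\<^sup>2) / real n))
      \<le> (\<Sum>i<n. \<alpha> * X i + \<beta> * (X i)\<^sup>2 + \<gamma>)" by (simp add: x_def y_def)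
qed

lemma cover_zero:
  assumes k: "k \<ge> 0"
  shows "covers {p. 0 < snd p \<and> snd p \<le> \<eta>} (\<lambda>z. (if z = 0 then 0 else 1/2) + k * (\<eta> - z\<^sup>2))"
  unfolding covers_def
proof (intro allI impI)
  fix n :: nat and X :: "nat \<Rightarrow> real"
  assume n: "n > 0"
  define S1 where "S1 = (\<Sum>i<n. X i)"
  define S2 where "S2 = (\<Sum>i<n. (X i)\<^sup>2)"
  define N where "N = (\<Sum>i<n. (if X i = 0 then 0 else 1::real))"
  assume "((\<Sum>i<n. X i) / real n, (\<Sum>i<n. (X i)\<^sup>2) / real n) \<in> {p. 0 < snd p \<and> snd p \<le> \<eta>}"
  then have S2p: "0 < S2" and S2le: "S2 \<le> real n * \<eta>" using n by (auto simp: S2_def field_simps)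
  have "S1\<^sup>2 = (\<Sum>i<n. (if X i = 0 then 0 else 1) * X i)\<^sup>2"
    unfolding S1_def by (intro arg_cong[where f="\<lambda>a. a\<^sup>2"] sum.cong) auto
  also have "\<dots> \<le> (\<Sum>i<n. (if X i = 0 then 0 else 1::real)\<^sup>2) * (\<Sum>i<n. (X i)\<^sup>2)"
    by (rule Cauchy_Schwarz_ineq_sum)
  also have "(\<Sum>i<n. (if X i = 0 then 0 else 1::real)\<^sup>2) = N" unfolding N_def by (intro sum.cong) auto
  finally have cs: "S1\<^sup>2 \<le> N * S2" by (simp add: S2_def)
  have "real n * (S1 / real n)\<^sup>2 / (2 * (S2 / real n)) = S1\<^sup>2 / (2 * S2)"
    using n by (simp add: power2_eq_square field_simps)
  also have "\<dots> \<le> N * S2 / (2 * S2)" using cs S2p by (intro divide_right_mono) auto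
  also have "\<dots> = N / 2" using S2p by simp
  also have "\<dots> \<le> N / 2 + k * (real n * \<eta> - S2)" using k S2le by simp
  also have "\<dots> = (\<Sum>i<n. (if X i = 0 then 0 else 1/2) + k * (\<eta> - (X i)\<^sup>2))"
  proof -
    have a: "(\<Sum>i<n. (if X i = 0 then 0 else 1/2::real)) = N / 2"
      unfolding N_def sum_divide_distrib by (intro sum.cong) auto
    have b: "(\<Sum>i<n. k * (\<eta> - (X i)\<^sup>2)) = k * (real n * \<eta> - S2)"
      by (simp add: S2_def sum_distrib_left[symmetric] sum_subtractf)
    show ?thesis by (simp only: sum.distrib a b)
  qed
  finally show "real n * ((\<Sum>i<n. X i) / real n)\<^sup>2 / (2 * ((\<Sum>i<n. (X i)\<^sup>2) / real n))
      \<le> (\<Sum>i<n. (if X i = 0 then 0 else 1/2) + k * (\<eta> - (X i)\<^sup>2))" by (simp add: S1_def S2_def)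
qed

lemma covers_Un: "covers U h \<Longrightarrow> covers V h \<Longrightarrow> covers (U \<union> V) h"
  unfolding covers_def by blast

lemma covers_subset: "covers U h \<Longrightarrow> V \<subseteq> U \<Longrightarrow> covers V h"
  unfolding covers_def by blast




context sym_rho begin

lemma local_cover:
  assumes ne: "(x0, y0) \<noteq> (0, (\<integral>z. z\<^sup>2 \<partial>\<rho>))" and y0: "y0 > 0"
  shows "\<exists>U h. open U \<and> (x0, y0) \<in> U \<and> goodr \<rho> h \<and> covers U h"
proof -
  define s2 where "s2 = (\<integral>z. z\<^sup>2 \<partial>\<rho>)"
  have s2p: "s2 > 0" using s2pos by (simp add: s2_def)
  consider "x0 \<noteq> 0" | "x0 = 0" "y0 > s2" | "x0 = 0" "y0 < s2"
    using ne by (fastforce simp: s2_def)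
  then show ?thesis
  proof cases
    case 1
    define t where "t = x0 / y0"
    have t: "t \<noteq> 0" using 1 y0 by (simp add: t_def)
    obtain \<gamma> where g: "\<gamma> > 0" and gd: "goodr \<rho> (\<lambda>z. (t * z - t\<^sup>2 * z\<^sup>2 / 2) + \<gamma>)"
      using goodr_slack[OF M_lt1[OF t]] by blast
    define U where "U = {p. 0 < snd p} \<inter> {p::real\<times>real. (fst p - t * snd p)\<^sup>2 < 2 * \<gamma> * snd p}"
    have "open U" unfolding U_def
      by (intro open_Int open_Collect_less continuous_intros)
    moreover have "(x0, y0) \<in> U" using y0 g by (simp add: U_def t_def)
    moreover have "covers U (\<lambda>z. t * z + (- t\<^sup>2 / 2) * z\<^sup>2 + \<gamma>)"
    proof (rule cover_lin)
      fix x y assume "(x, y) \<in> U"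
      then have y: "0 < y" and lt: "(x - t * y)\<^sup>2 < 2 * \<gamma> * y" by (auto simp: U_def)
      have "x\<^sup>2 / (2 * y) = t * x + (- t\<^sup>2 / 2) * y + (x - t * y)\<^sup>2 / (2 * y)"
        using y by (simp add: field_simps power2_eq_square)
      also have "(x - t * y)\<^sup>2 / (2 * y) \<le> \<gamma>" using lt y by (simp add: divide_le_eq)
      finally show "0 < y \<and> x\<^sup>2 / (2 * y) \<le> t * x + (- t\<^sup>2 / 2) * y + \<gamma>" using y by simp
    qed
    moreover have "(\<lambda>z. t * z + (- t\<^sup>2 / 2) * z\<^sup>2 + \<gamma>) = (\<lambda>z. (t * z - t\<^sup>2 * z\<^sup>2 / 2) + \<gamma>)"
      by (rule ext) (simp add: algebra_simps)
    ultimately show ?thesis using gd by metis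
  next
    case 2
    define c where "c = (y0 + s2) / 2"
    have c: "c > s2" "c < y0" using 2 by (auto simp: c_def)
    obtain v where v: "v > 0" and gv: "goodr \<rho> (\<lambda>z. v * (z\<^sup>2 - c))"
      using good_above[of c] c by (auto simp: s2_def)
    obtain \<gamma> where g: "\<gamma> > 0" and gd: "goodr \<rho> (\<lambda>z. v * (z\<^sup>2 - c) + \<gamma>)"
      using goodr_slack[OF gv] by blast
    define U where "U = {p::real\<times>real. c < snd p} \<inter> {p::real\<times>real. (fst p)\<^sup>2 < 2 * \<gamma> * snd p}"
    have "open U" unfolding U_def
      by (intro open_Int open_Collect_less continuous_intros)
    moreover have "(x0, y0) \<in> U" using y0 g c 2 by (simp add: U_def)
    moreover have "covers U (\<lambda>z. 0 * z + v * z\<^sup>2 + (\<gamma> - v * c))"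
    proof (rule cover_lin)
      fix x y assume "(x, y) \<in> U"
      then have y: "c < y" and lt: "x\<^sup>2 < 2 * \<gamma> * y" by (auto simp: U_def)
      have y0': "0 < y" using y c s2p by linarith
      have "x\<^sup>2 / (2 * y) \<le> \<gamma>" using lt y0' by (simp add: divide_le_eq)
      also have "\<gamma> \<le> 0 * x + v * y + (\<gamma> - v * c)" using v y by (simp add: algebra_simps)
      finally show "0 < y \<and> x\<^sup>2 / (2 * y) \<le> 0 * x + v * y + (\<gamma> - v * c)" using y0' by simp
    qed
    moreover have "(\<lambda>z. 0 * z + v * z\<^sup>2 + (\<gamma> - v * c)) = (\<lambda>z. v * (z\<^sup>2 - c) + \<gamma>)"
      by (rule ext) (simp add: algebra_simps)
    ultimately show ?thesis using gd by metis
  next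
    case 3
    define c where "c = (y0 + s2) / 2"
    have c: "c < s2" "c > y0" using 3 by (auto simp: c_def)
    obtain v where v: "v > 0" and gv: "goodr \<rho> (\<lambda>z. v * (c - z\<^sup>2))"
      using good_below[of c] c by (auto simp: s2_def)
    obtain \<gamma> where g: "\<gamma> > 0" and gd: "goodr \<rho> (\<lambda>z. v * (c - z\<^sup>2) + \<gamma>)"
      using goodr_slack[OF gv] by blast
    define U where "U = {p::real\<times>real. 0 < snd p} \<inter> {p::real\<times>real. snd p < c} \<inter> {p::real\<times>real. (fst p)\<^sup>2 < 2 * \<gamma> * snd p}"
    have "open U" unfolding U_def
      by (intro open_Int open_Collect_less continuous_intros)
    moreover have "(x0, y0) \<in> U" using y0 g c 3 by (simp add: U_def)
    moreover have "covers U (\<lambda>z. 0 * z + (- v) * z\<^sup>2 + (\<gamma> + v * c))"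
    proof (rule cover_lin)
      fix x y assume "(x, y) \<in> U"
      then have y0': "0 < y" and y: "y < c" and lt: "x\<^sup>2 < 2 * \<gamma> * y" by (auto simp: U_def)
      have "x\<^sup>2 / (2 * y) \<le> \<gamma>" using lt y0' by (simp add: divide_le_eq)
      also have "\<gamma> \<le> 0 * x + (- v) * y + (\<gamma> + v * c)" using v y by (simp add: algebra_simps)
      finally show "0 < y \<and> x\<^sup>2 / (2 * y) \<le> 0 * x + (- v) * y + (\<gamma> + v * c)" using y0' by simp
    qed
    moreover have "(\<lambda>z. 0 * z + (- v) * z\<^sup>2 + (\<gamma> + v * c)) = (\<lambda>z. v * (c - z\<^sup>2) + \<gamma>)"
      by (rule ext) (simp add: algebra_simps)
    ultimately show ?thesis using gd by metis
  qed
qed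

end



context sym_rho begin

lemma family:
  assumes A: "closed A" and nA: "(0, (\<integral>z. z\<^sup>2 \<partial>\<rho>)) \<notin> A"
  shows "\<exists>F. finite F \<and> (\<forall>h\<in>F. goodr \<rho> h) \<and>
    (\<forall>n X. n > 0 \<longrightarrow> ((\<Sum>i<n. X i) / real n, (\<Sum>i<n. (X i)\<^sup>2) / real n) \<in> Delta_star \<inter> A \<longrightarrow>
       (\<exists>h\<in>F. real n * ((\<Sum>i<n. X i) / real n)\<^sup>2 / (2 * ((\<Sum>i<n. (X i)\<^sup>2) / real n)) \<le> (\<Sum>i<n. h (X i))))"
proof -
  obtain k \<eta> where k: "k \<ge> 0" and eta: "\<eta> > 0"
    and gZ: "goodr \<rho> (\<lambda>z. (if z = 0 then 0 else 1/2) + k * (\<eta> - z\<^sup>2))"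
    using good_zero by blast
  define hZ where "hZ = (\<lambda>z::real. (if z = 0 then 0 else 1/2) + k * (\<eta> - z\<^sup>2))"
  have cZ: "covers {p. 0 < snd p \<and> snd p \<le> \<eta>} hZ" unfolding hZ_def by (rule cover_zero[OF k])
  obtain Y where gB: "goodr \<rho> (\<lambda>z. 1/2 + \<epsilon> * (z\<^sup>2 - Y))" using good_big by blast
  define hB where "hB = (\<lambda>z::real. 1/2 + \<epsilon> * (z\<^sup>2 - Y))"
  have cB: "covers {p. (fst p)\<^sup>2 \<le> snd p \<and> 0 < snd p \<and> Y \<le> snd p} hB"
  proof -
    have "covers {p. (fst p)\<^sup>2 \<le> snd p \<and> 0 < snd p \<and> Y \<le> snd p} (\<lambda>z. 0 * z + \<epsilon> * z\<^sup>2 + (1/2 - \<epsilon> * Y))"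
    proof (rule cover_lin)
      fix x y assume "(x, y) \<in> {p. (fst p)\<^sup>2 \<le> snd p \<and> 0 < snd p \<and> Y \<le> snd p}"
      then have xy: "x\<^sup>2 \<le> y" and y: "0 < y" and Y: "Y \<le> y" by auto
      have "x\<^sup>2 / (2 * y) \<le> y / (2 * y)" using xy y by (intro divide_right_mono) auto
      also have "\<dots> = 1/2" using y by simp
      also have "\<dots> \<le> 0 * x + \<epsilon> * y + (1/2 - \<epsilon> * Y)" using eps Y by (simp add: algebra_simps)
      finally show "0 < y \<and> x\<^sup>2 / (2 * y) \<le> 0 * x + \<epsilon> * y + (1/2 - \<epsilon> * Y)" using y by simp
    qed
    moreover have "(\<lambda>z. 0 * z + \<epsilon> * z\<^sup>2 + (1/2 - \<epsilon> * Y)) = hB"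
      by (rule ext) (simp add: hB_def algebra_simps)
    ultimately show ?thesis by simp
  qed
  define K where "K = A \<inter> {p::real\<times>real. (fst p)\<^sup>2 \<le> snd p} \<inter> {p. \<eta> \<le> snd p} \<inter> {p. snd p \<le> Y}"
  have "closed K" unfolding K_def
    by (intro closed_Int A closed_Collect_le continuous_intros)
  moreover have "bounded K"
  proof -
    have "norm p \<le> sqrt (\<bar>Y\<bar> + Y\<^sup>2)" if "p \<in> K" for p
    proof -
      obtain x y where p: "p = (x, y)" by (cases p)
      from that have xy: "x\<^sup>2 \<le> y" and y: "\<eta> \<le> y" "y \<le> Y" by (auto simp: K_def p)
      have "y\<^sup>2 \<le> Y\<^sup>2" using y eta by (intro power_mono) auto
      then have "x\<^sup>2 + y\<^sup>2 \<le> \<bar>Y\<bar> + Y\<^sup>2" using xy y by linarith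
      then show ?thesis by (simp add: p norm_Pair)
    qed
    then show ?thesis unfolding bounded_iff by blast
  qed
  ultimately have cK: "compact K" by (simp add: compact_eq_bounded_closed)
  have "\<forall>p\<in>K. \<exists>Uh. open (fst Uh) \<and> p \<in> fst Uh \<and> goodr \<rho> (snd Uh) \<and> covers (fst Uh) (snd Uh)"
  proof
    fix p assume pK: "p \<in> K"
    obtain x y where p: "p = (x, y)" by (cases p)
    have "(x, y) \<noteq> (0, (\<integral>z. z\<^sup>2 \<partial>\<rho>))" using pK nA by (auto simp: K_def p)
    moreover have "y > 0" using pK eta by (auto simp: K_def p)
    ultimately obtain U h where "open U \<and> (x, y) \<in> U \<and> goodr \<rho> h \<and> covers U h"
      using local_cover by blast
    then show "\<exists>Uh. open (fst Uh) \<and> p \<in> fst Uh \<and> goodr \<rho> (snd Uh) \<and> covers (fst Uh) (snd Uh)"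
      by (intro exI[of _ "(U, h)"]) (simp add: p)
  qed
  then obtain g where g: "\<And>p. p \<in> K \<Longrightarrow> open (fst (g p)) \<and> p \<in> fst (g p) \<and> goodr \<rho> (snd (g p)) \<and> covers (fst (g p)) (snd (g p))"
    by metis
  obtain K' where K': "K' \<subseteq> K" "finite K'" "K \<subseteq> (\<Union>p\<in>K'. fst (g p))"
    using compactE_image[OF cK, of K "\<lambda>p. fst (g p)"] g by blast
  define F where "F = {hZ, hB} \<union> (\<lambda>p. snd (g p)) ` K'"
  have "finite F" using K' by (simp add: F_def)
  moreover have "\<forall>h\<in>F. goodr \<rho> h" using gZ gB g K' by (auto simp: F_def hZ_def hB_def)
  moreover have "\<forall>n X. n > 0 \<longrightarrow> ((\<Sum>i<n. X i) / real n, (\<Sum>i<n. (X i)\<^sup>2) / real n) \<in> Delta_star \<inter> A \<longrightarrow>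
       (\<exists>h\<in>F. real n * ((\<Sum>i<n. X i) / real n)\<^sup>2 / (2 * ((\<Sum>i<n. (X i)\<^sup>2) / real n)) \<le> (\<Sum>i<n. h (X i)))"
  proof (intro allI impI)
    fix n :: nat and X :: "nat \<Rightarrow> real"
    assume n: "n > 0"
    define x where "x = (\<Sum>i<n. X i) / real n"
    define y where "y = (\<Sum>i<n. (X i)\<^sup>2) / real n"
    assume "((\<Sum>i<n. X i) / real n, (\<Sum>i<n. (X i)\<^sup>2) / real n) \<in> Delta_star \<inter> A"
    then have inS: "(x, y) \<in> Delta_star \<inter> A" by (simp add: x_def y_def)
    then have xy: "x\<^sup>2 \<le> y" and ne: "(x, y) \<noteq> (0, 0)" and xA: "(x, y) \<in> A"
      by (auto simp: Delta_star_def Delta_def)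
    have y: "y > 0"
    proof (rule ccontr)
      assume "\<not> y > 0"
      then have "x\<^sup>2 \<le> 0" using xy by linarith
      then have "x = 0" by simp
      then show False using ne xy \<open>\<not> y > 0\<close> by simp
    qed
    have key: "covers U h \<Longrightarrow> (x, y) \<in> U \<Longrightarrow> h \<in> F \<Longrightarrow>
       \<exists>h\<in>F. real n * ((\<Sum>i<n. X i) / real n)\<^sup>2 / (2 * ((\<Sum>i<n. (X i)\<^sup>2) / real n)) \<le> (\<Sum>i<n. h (X i))" for U h
      unfolding covers_def using n by (auto simp: x_def y_def)
    consider "y \<le> \<eta>" | "Y \<le> y" | "\<eta> < y" "y < Y" by linarith
    then show "\<exists>h\<in>F. real n * ((\<Sum>i<n. X i) / real n)\<^sup>2 / (2 * ((\<Sum>i<n. (X i)\<^sup>2) / real n)) \<le> (\<Sum>i<n. h (X i))"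
    proof cases
      case 1 then show ?thesis using key[OF cZ] y by (simp add: F_def)
    next
      case 2 then show ?thesis using key[OF cB] y xy by (simp add: F_def)
    next
      case 3
      then have "(x, y) \<in> K" using xA xy by (auto simp: K_def)
      then obtain p where p: "p \<in> K'" "(x, y) \<in> fst (g p)" using K' by blast
      have "covers (fst (g p)) (snd (g p))" using g p K' by blast
      from key[OF this p(2)] show ?thesis using p by (simp add: F_def)
    qed
  qed
  ultimately show ?thesis by blast
qed

end



lemma integral_bound_n:
  fixes \<rho> :: "real measure" and S :: "(real \<times> real) set" and F :: "(real \<Rightarrow> real) set"
  assumes P: "prob_space \<rho>" and sets: "sets \<rho> = sets borel"
    and S: "S \<in> sets borel" and F: "finite F"
    and Fm: "\<And>h. h \<in> F \<Longrightarrow> h \<in> borel_measurable borel"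
    and Fb: "\<And>h. h \<in> F \<Longrightarrow> (\<integral>\<^sup>+ x. ennreal (exp (h x)) \<partial>\<rho>) \<le> ennreal mr"
    and mr: "0 \<le> mr"
    and cover: "\<And>X. ((\<Sum>i<n. X i) / real n, (\<Sum>i<n. (X i)\<^sup>2) / real n) \<in> S \<Longrightarrow>
        \<exists>h\<in>F. real n * (((\<Sum>i<n. X i) / real n))\<^sup>2 / (2 * ((\<Sum>i<n. (X i)\<^sup>2) / real n)) \<le> (\<Sum>i<n. h (X i))"
  shows "(\<integral>\<^sup>+ p. indicator S p * ennreal (exp (real n * (fst p)\<^sup>2 / (2 * snd p))) \<partial>(nu_tilde n \<rho>))
          \<le> ennreal (real (card F) * mr ^ n)"
proof -
  interpret R: prob_space \<rho> by (rule P)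
  interpret product_prob_space "\<lambda>_. \<rho>" "{..<n}" by unfold_locales
  have mc: "measurable \<rho> N = measurable borel N" for N :: "'b measure"
    by (rule measurable_cong_sets[OF sets refl])
  have Fm': "h \<in> borel_measurable \<rho>" if "h \<in> F" for h using Fm[OF that] by (simp add: measurable_cong_sets[OF sets refl])
  let ?T = "\<lambda>X. ((\<Sum>i<n. X i) / real n, (\<Sum>i<n. (X i)\<^sup>2) / real n)"
  have Tm: "?T \<in> measurable (PiM {..<n} (\<lambda>_. \<rho>)) borel"
    using sets by measurable
  have fstm[measurable]: "(fst :: real \<times> real \<Rightarrow> real) \<in> borel_measurable borel"
    by (intro borel_measurable_continuous_onI continuous_intros)
  have sndm[measurable]: "(snd :: real \<times> real \<Rightarrow> real) \<in> borel_measurable borel"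
    by (intro borel_measurable_continuous_onI continuous_intros)
  have fm: "(\<lambda>p. indicator S p * ennreal (exp (real n * (fst p)\<^sup>2 / (2 * snd p)))) \<in> borel_measurable borel"
    using S by measurable
  have "(\<integral>\<^sup>+ p. indicator S p * ennreal (exp (real n * (fst p)\<^sup>2 / (2 * snd p))) \<partial>(nu_tilde n \<rho>))
     = (\<integral>\<^sup>+ X. indicator S (?T X) * ennreal (exp (real n * (fst (?T X))\<^sup>2 / (2 * snd (?T X)))) \<partial>PiM {..<n} (\<lambda>_. \<rho>))"
    unfolding nu_tilde_def by (rule nn_integral_distr[OF Tm]) (use fm in simp)
  also have "\<dots> \<le> (\<integral>\<^sup>+ X. (\<Sum>h\<in>F. (\<Prod>i\<in>{..<n}. ennreal (exp (h (X i))))) \<partial>PiM {..<n} (\<lambda>_. \<rho>))"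
  proof (rule nn_integral_mono)
    fix X
    show "indicator S (?T X) * ennreal (exp (real n * (fst (?T X))\<^sup>2 / (2 * snd (?T X))))
          \<le> (\<Sum>h\<in>F. (\<Prod>i\<in>{..<n}. ennreal (exp (h (X i)))))"
    proof (cases "?T X \<in> S")
      case False then show ?thesis by simp
    next
      case True
      from cover[OF True] obtain h where h: "h \<in> F"
        and hle: "real n * (((\<Sum>i<n. X i) / real n))\<^sup>2 / (2 * ((\<Sum>i<n. (X i)\<^sup>2) / real n)) \<le> (\<Sum>i<n. h (X i))"
        by blast
      have "indicator S (?T X) * ennreal (exp (real n * (fst (?T X))\<^sup>2 / (2 * snd (?T X))))
          = ennreal (exp (real n * (((\<Sum>i<n. X i) / real n))\<^sup>2 / (2 * ((\<Sum>i<n. (X i)\<^sup>2) / real n))))"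
        using True by simp
      also have "\<dots> \<le> ennreal (exp (\<Sum>i<n. h (X i)))"
        using hle by (intro ennreal_leI) simp
      also have "\<dots> = (\<Prod>i\<in>{..<n}. ennreal (exp (h (X i))))"
        by (simp add: exp_sum prod_ennreal)
      also have "\<dots> \<le> (\<Sum>h\<in>F. (\<Prod>i\<in>{..<n}. ennreal (exp (h (X i)))))"
        by (rule member_le_sum[OF h]) (auto simp: F)
      finally show ?thesis .
    qed
  qed
  also have "\<dots> = (\<Sum>h\<in>F. (\<integral>\<^sup>+ X. (\<Prod>i\<in>{..<n}. ennreal (exp (h (X i)))) \<partial>PiM {..<n} (\<lambda>_. \<rho>)))"
    by (rule nn_integral_sum) (use Fm' in measurable)
  also have "\<dots> = (\<Sum>h\<in>F. (\<Prod>i\<in>{..<n}. (\<integral>\<^sup>+ x. ennreal (exp (h x)) \<partial>\<rho>)))"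
    by (intro sum.cong refl product_nn_integral_prod) (use Fm' in auto)
  also have "\<dots> \<le> (\<Sum>h\<in>F. (\<Prod>i\<in>{..<n}. ennreal mr))"
    by (intro sum_mono) (auto intro!: power_mono Fb)
  also have "\<dots> = ennreal (real (card F) * mr ^ n)"
    using mr by (simp add: prod_ennreal ennreal_mult' ennreal_power ennreal_of_nat_eq_real_of_nat)
  finally show ?thesis .
qed




lemma limsup_neg:
  fixes I :: "nat \<Rightarrow> ennreal" and K mr :: real
  assumes I: "\<And>n. n > 0 \<Longrightarrow> I n \<le> ennreal (K * mr ^ n)"
    and K: "K \<ge> 1" and mr: "0 < mr" "mr < 1"
  shows "limsup (\<lambda>n. ereal (1 / real n) * eln (I n)) < 0"
proof -
  define c where "c = ln mr / 2"
  have lnmr: "ln mr < 0" using mr by simp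
  have "eventually (\<lambda>n. ln K / real n \<le> - c) sequentially"
  proof -
    have "(\<lambda>n. ln K / real n) \<longlonglongrightarrow> 0"
      by (intro tendsto_divide_0[OF tendsto_const] filterlim_at_top_imp_at_infinity filterlim_real_sequentially)
    moreover have "- c > 0" using lnmr by (simp add: c_def)
    ultimately have "eventually (\<lambda>n. dist (ln K / real n) 0 < - c) sequentially"
      by (simp add: tendsto_iff)
    then show ?thesis
      proof eventually_elim
        case (elim n)
        have "ln K / real n \<le> \<bar>ln K\<bar> / real n" by (simp add: divide_right_mono)
        then show ?case using elim by (simp add: dist_real_def abs_divide)
      qed
  qed
  moreover have "eventually (\<lambda>n. n > 0) sequentially" by (simp add: eventually_gt_at_top)
  ultimately have ev: "eventually (\<lambda>n. ereal (1 / real n) * eln (I n) \<le> ereal c) sequentially"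
  proof eventually_elim
    case (elim n)
    have Ile: "I n \<le> ennreal (K * mr ^ n)" using I elim(2) by simp
    show ?case
    proof (cases "I n = 0")
      case True
      then show ?thesis using elim by (simp add: eln_def)
    next
      case False
      have fin: "I n \<noteq> \<infinity>" using Ile by (auto simp: top_unique)
      define r where "r = enn2real (I n)"
      have r: "0 < r" using False fin by (simp add: r_def enn2real_positive_iff less_top zero_less_iff_neq_zero)
      have rle: "r \<le> K * mr ^ n" unfolding r_def
        using Ile K mr by (metis enn2real_ennreal enn2real_mono ennreal_neq_top less_top mult_nonneg_nonneg order.trans zero_le_one zero_le_power less_imp_le)
      have "ln r \<le> ln (K * mr ^ n)" using r rle by simp
      also have "\<dots> = ln K + real n * ln mr" using K mr by (simp add: ln_mult ln_realpow)
      finally have "ln r / real n \<le> ln K / real n + ln mr" using elim(2) by (simp add: field_simps)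
      also have "\<dots> \<le> c" using elim(1) unfolding c_def by linarith
      finally have "ln r / real n \<le> c" .
      moreover have "ereal (1 / real n) * eln (I n) = ereal (ln r / real n)"
        using False fin by (simp add: eln_def r_def)
      ultimately show ?thesis by simp
    qed
  qed
  have "limsup (\<lambda>n. ereal (1 / real n) * eln (I n)) \<le> ereal c"
    by (rule Limsup_bounded[OF ev])
  also have "\<dots> < 0" using lnmr by (simp add: c_def)
  finally show ?thesis .
qed




theorem proposition5:
  fixes \<rho> :: "real measure" and \<sigma>2 :: real and A :: "(real \<times> real) set"
  assumes "prob_space \<rho>" and "sets \<rho> = sets borel"
    and "distr \<rho> borel uminus = \<rho>"
    and "\<sigma>2 = prob_space.variance \<rho> (\<lambda>z. z)" and "\<sigma>2 > 0"
    and "(0, 0) \<in> interior (D_Lambda \<rho>)"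
    and "closed A" and "(0, \<sigma>2) \<notin> A"
  shows "limsup (\<lambda>n. ereal (1 / real n) *
           eln (\<integral>\<^sup>+ p. indicator (Delta_star \<inter> A) p *
                  ennreal (exp (real n * (fst p)\<^sup>2 / (2 * snd p))) \<partial>(nu_tilde n \<rho>))) < 0"
proof -
  note P = assms(1) and sets = assms(2) and symm = assms(3)
  interpret prob_space \<rho> by (rule P)
  obtain e where e: "e > 0" and ball: "ball (0, 0) e \<subseteq> D_Lambda \<rho>"
    using assms(6) by (auto simp: mem_interior)
  have "dist (0::real, 0::real) (0, e/2) = e/2" using e by (simp add: dist_prod_def)
  then have "(0, e/2) \<in> ball (0::real, 0::real) e" using e by (simp add: mem_ball)
  with ball have "(0, e/2) \<in> D_Lambda \<rho>" by blast
  then have fin: "(\<integral>\<^sup>+ z. ennreal (exp (e/2 * z\<^sup>2)) \<partial>\<rho>) < \<infinity>"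
    by (simp add: D_Lambda_def)
  have m0: "(\<integral>z. z \<partial>\<rho>) = 0"
  proof -
    have um: "uminus \<in> measurable \<rho> borel" by (simp add: measurable_cong_sets[OF sets refl])
    have "(\<integral>z. z \<partial>(distr \<rho> borel uminus)) = (\<integral>z. - z \<partial>\<rho>)"
      by (rule integral_distr[OF um]) simp
    then have "(\<integral>z. z \<partial>\<rho>) = - (\<integral>z. z \<partial>\<rho>)" using symm by simp
    then show ?thesis by simp
  qed
  have s2: "\<sigma>2 = (\<integral>z. z\<^sup>2 \<partial>\<rho>)" using assms(4) m0 by simp
  interpret sym_rho \<rho> "e/2"
    by unfold_locales (use P sets symm e fin s2 assms(5) in auto)
  obtain F where F: "finite F" and Fg: "\<forall>h\<in>F. goodr \<rho> h"
    and Fc: "\<forall>n X. n > 0 \<longrightarrow> ((\<Sum>i<n. X i) / real n, (\<Sum>i<n. (X i)\<^sup>2) / real n) \<in> Delta_star \<inter> A \<longrightarrow>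
       (\<exists>h\<in>F. real n * ((\<Sum>i<n. X i) / real n)\<^sup>2 / (2 * ((\<Sum>i<n. (X i)\<^sup>2) / real n)) \<le> (\<Sum>i<n. h (X i)))"
    using family[OF assms(7)] assms(8) s2 by auto
  define mr where "mr = Max (insert (1/2) ((\<lambda>h. \<integral>z. exp (h z) \<partial>\<rho>) ` F))"
  have mr1: "mr < 1" unfolding mr_def using F Fg by (auto simp: goodr_def)
  have mr0: "mr \<ge> 1/2" unfolding mr_def using F by (intro Max_ge) auto
  have Fb: "(\<integral>\<^sup>+ x. ennreal (exp (h x)) \<partial>\<rho>) \<le> ennreal mr" if h: "h \<in> F" for h
  proof -
    have "(\<integral>\<^sup>+ x. ennreal (exp (h x)) \<partial>\<rho>) = ennreal (\<integral>z. exp (h z) \<partial>\<rho>)"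
      using Fg h by (intro nn_integral_eq_integral) (auto simp: goodr_def)
    also have "(\<integral>z. exp (h z) \<partial>\<rho>) \<le> mr" unfolding mr_def using F h by (intro Max_ge) auto
    finally show ?thesis by (simp add: ennreal_leI)
  qed
  have Sb: "Delta_star \<inter> A \<in> sets borel"
  proof -
    have "Delta = {p::real\<times>real. (fst p)\<^sup>2 \<le> snd p}" by (auto simp: Delta_def)
    moreover have "closed {p::real\<times>real. (fst p)\<^sup>2 \<le> snd p}"
      by (intro closed_Collect_le continuous_intros)
    ultimately have "Delta \<in> sets borel" by simp
    then show ?thesis using assms(7) by (auto simp: Delta_star_def)
  qed
  have Ib: "(\<integral>\<^sup>+ p. indicator (Delta_star \<inter> A) p * ennreal (exp (real n * (fst p)\<^sup>2 / (2 * snd p))) \<partial>(nu_tilde n \<rho>))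
      \<le> ennreal ((real (card F) + 1) * mr ^ n)" if n: "n > 0" for n
  proof -
    have "(\<integral>\<^sup>+ p. indicator (Delta_star \<inter> A) p * ennreal (exp (real n * (fst p)\<^sup>2 / (2 * snd p))) \<partial>(nu_tilde n \<rho>))
      \<le> ennreal (real (card F) * mr ^ n)"
      by (rule integral_bound_n[OF P sets Sb F _ Fb]) (use Fg Fc n mr0 in \<open>auto simp: goodr_def\<close>)
    also have "\<dots> \<le> ennreal ((real (card F) + 1) * mr ^ n)"
      using mr0 by (intro ennreal_leI mult_right_mono) auto
    finally show ?thesis .
  qed
  show ?thesis
    by (rule limsup_neg[OF Ib]) (use mr0 mr1 in auto)
qed


end
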